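(* Let $m\ge 1$ and $k\ge 1$ be integers with $\gcd(k,\tau(m))=1$. Then $\sigma(m)$ divides $\sigma_k(m)$. In particular, if $m$ is multiperfect (i.e. $m\mid\sigma(m)$), then $m\mid\sigma_k(m)$ for every $k\ge 1$ coprime to $\tau(m)$. Consequently, if $m$ is multiperfect and $\tau(m)$ is a power of $2$, then $m\mid\sigma_k(m)$ for every odd $k\ge 1$.
   Context: For integers $k\ge 0$ and $n\ge 1$, $\sigma_k(n)=\sum_{d\mid n} d^k$, and $\sigma=\sigma_1$. $\tau(n)=\sigma_0(n)$ is the number of positive divisors of $n$. *)

theory Defs
  imports Main
begin

text \<open>sigma_k(n) = sum of d^k over positive divisors d of n (intended for n >= 1).\<close>
definition divisor_sigma :: "nat \<Rightarrow> nat \<Rightarrow> nat" where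
  "divisor_sigma k n = (\<Sum>d\<in>{d. d dvd n}. d ^ k)"

definition sigma :: "nat \<Rightarrow> nat" where
  "sigma n = divisor_sigma 1 n"

definition tau :: "nat \<Rightarrow> nat" where
  "tau n = divisor_sigma 0 n"

end

theory Submission
  imports Defs "HOL-Number_Theory.Number_Theory"
begin

lemma bij_mult_mod:
  fixes n k :: nat
  assumes "n > 0" "coprime k n"
  shows "bij_betw (\<lambda>i. i * k mod n) {..<n} {..<n}"
proof -
  have inj: "inj_on (\<lambda>i. i * k mod n) {..<n}"
  proof (rule inj_onI)
    fix i j assume i: "i \<in> {..<n}" and j: "j \<in> {..<n}" and e: "i * k mod n = j * k mod n"
    have "[i * k = j * k] (mod n)" using e by (simp add: cong_def)
    hence "[i = j] (mod n)" using cong_mult_rcancel_nat[OF assms(2)] by simp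
    thus "i = j" using i j by (simp add: cong_def)
  qed
  have sub: "(\<lambda>i. i * k mod n) ` {..<n} \<subseteq> {..<n}" using assms(1) by auto
  have "card ((\<lambda>i. i * k mod n) ` {..<n}) = card {..<n}" using card_image[OF inj] by simp
  hence "(\<lambda>i. i * k mod n) ` {..<n} = {..<n}" using sub by (simp add: card_subset_eq)
  thus ?thesis using inj by (simp add: bij_betw_def)
qed

lemma key_int:
  fixes x :: int and n k :: nat
  assumes "n > 0" "coprime k n"
  shows "(\<Sum>i<n. x^i) dvd (\<Sum>i<n. x^(i*k))"
proof -
  let ?A = "\<Sum>i<n. x^i"
  have A: "?A = (\<Sum>i<n. x^(i*k mod n))"
    using sum.reindex_bij_betw[OF bij_mult_mod[OF assms], of "\<lambda>j. x^j"] by simp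
  have AN: "?A dvd x^n - 1" using power_diff_1_eq[of x n] by simp
  have "x^n - 1 dvd x^(i*k) - x^(i*k mod n)" for i
  proof -
    have "x^(i*k) = x^(i*k mod n) * (x^n)^(i*k div n)"
      by (metis mod_div_mult_eq mult.commute power_add power_mult)
    hence "x^(i*k) - x^(i*k mod n) = x^(i*k mod n) * ((x^n)^(i*k div n) - 1)"
      by (simp add: algebra_simps)
    moreover have "x^n - 1 dvd (x^n)^(i*k div n) - 1"
      using power_diff_1_eq[of "x^n" "i*k div n"] by simp
    ultimately show ?thesis by simp
  qed
  hence "x^n - 1 dvd (\<Sum>i<n. x^(i*k) - x^(i*k mod n))" by (intro dvd_sum) auto
  hence "x^n - 1 dvd (\<Sum>i<n. x^(i*k)) - ?A" by (simp add: A sum_subtractf)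
  hence "?A dvd (\<Sum>i<n. x^(i*k)) - ?A" using AN dvd_trans by blast
  hence "?A dvd ((\<Sum>i<n. x^(i*k)) - ?A) + ?A" by (rule dvd_add) simp
  thus ?thesis by simp
qed

lemma key_nat:
  fixes x n k :: nat
  assumes "n > 0" "coprime k n"
  shows "(\<Sum>i<n. x^i) dvd (\<Sum>i<n. x^(i*k))"
proof -
  have "(\<Sum>i<n. int x^i) dvd (\<Sum>i<n. int x^(i*k))" by (rule key_int[OF assms])
  hence "int (\<Sum>i<n. x^i) dvd int (\<Sum>i<n. x^(i*k))" by simp
  thus ?thesis by (simp only: int_dvd_int_iff)
qed

lemma sigma_primepow:
  fixes p a k :: nat
  assumes "prime p"
  shows "divisor_sigma k (p^a) = (\<Sum>i<Suc a. p^(i*k))"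
proof -
  have set: "{d. d dvd p^a} = (\<lambda>i. p^i) ` {..<Suc a}"
    using divides_primepow_nat[OF assms] by (auto simp: less_Suc_eq_le)
  have p1: "p > 1" using assms prime_gt_1_nat by blast
  have inj: "inj_on (\<lambda>i. p^i) {..<Suc a}"
    using p1 by (auto simp: inj_on_def power_inject_exp)
  have "divisor_sigma k (p^a) = (\<Sum>i<Suc a. (p^i)^k)"
    unfolding divisor_sigma_def set by (simp add: sum.reindex[OF inj])
  thus ?thesis by (simp add: power_mult)
qed

lemma sigma_mult:
  fixes a b k :: nat
  assumes "coprime a b" "a > 0" "b > 0"
  shows "divisor_sigma k (a*b) = divisor_sigma k a * divisor_sigma k b"
proof -
  let ?D = "{d. d dvd a} \<times> {d. d dvd b}"
  have set: "{d. d dvd a*b} = (\<lambda>(x,y). x*y) ` ?D"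
    by (auto dest: division_decomp intro: mult_dvd_mono)
  have inj: "inj_on (\<lambda>(x,y). x*y) ?D"
  proof (rule inj_onI, clarify)
    fix x1 y1 x2 y2 :: nat
    assume h: "x1 dvd a" "y1 dvd b" "x2 dvd a" "y2 dvd b" "x1*y1 = x2*y2"
    have c1: "coprime a y1" using coprime_divisors[OF dvd_refl h(2) assms(1)] .
    have c2: "coprime a y2" using coprime_divisors[OF dvd_refl h(4) assms(1)] .
    have "gcd (x1*y1) a = x1"
      using gcd_mult_left_right_cancel[OF c1, of x1] h(1) by (simp add: gcd_nat.absorb1)
    moreover have "gcd (x2*y2) a = x2"
      using gcd_mult_left_right_cancel[OF c2, of x2] h(3) by (simp add: gcd_nat.absorb1)
    ultimately have "x1 = x2" using h(5) by simp
    moreover have "x1 > 0" using h(1) assms(2) by (metis dvd_0_left_iff gr0I)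
    ultimately show "x1 = x2 \<and> y1 = y2" using h(5) by simp
  qed
  have "divisor_sigma k (a*b) = (\<Sum>(x,y)\<in>?D. (x*y)^k)"
    unfolding divisor_sigma_def set using sum.reindex[OF inj, of "\<lambda>d. d^k"]
    by (simp add: case_prod_unfold)
  also have "\<dots> = (\<Sum>x\<in>{d. d dvd a}. \<Sum>y\<in>{d. d dvd b}. x^k * y^k)"
    by (simp add: sum.cartesian_product power_mult_distrib)
  also have "\<dots> = divisor_sigma k a * divisor_sigma k b"
    unfolding divisor_sigma_def by (simp add: sum_product)
  finally show ?thesis .
qed

lemma part1:
  fixes k :: nat
  shows "m \<ge> 1 \<Longrightarrow> coprime k (tau m) \<Longrightarrow> sigma m dvd divisor_sigma k m"
proof (induction m rule: less_induct)
  case (less m)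
  show ?case
  proof (cases "m = 1")
    case True
    thus ?thesis by (simp add: sigma_def divisor_sigma_def)
  next
    case False
    then obtain p where p: "prime p" "p dvd m" using prime_factor_nat by blast
    define a where "a = multiplicity p m"
    obtain r where r: "m = p^a * r" "\<not> p dvd r"
      using multiplicity_decompose'[of m p] less.prems(1) p(1) unfolding a_def
      by (metis not_one_le_zero not_prime_unit)
    have a0: "a > 0" using p less.prems(1) unfolding a_def
      by (metis multiplicity_gt_zero_iff not_one_le_zero not_prime_unit)
    have p1: "p > 1" using p prime_gt_1_nat by blast
    have r0: "r > 0" using r less.prems(1) by (metis gr0I mult_0_right not_one_le_zero)
    have "p^a > 1" using p1 a0 by (metis one_less_power)
    hence rm: "r < m" using r(1) r0 by simp
    have cop: "coprime (p^a) r" using p r(2)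
      by (simp add: prime_imp_coprime coprime_power_left_iff)
    have pa0: "p^a > 0" using p1 by simp
    have tau: "tau m = Suc a * tau r"
      unfolding tau_def r(1) sigma_mult[OF cop pa0 r0] sigma_primepow[OF p(1)] by simp
    have ck1: "coprime k (Suc a)" and ck2: "coprime k (tau r)"
      using less.prems(2) unfolding tau by (simp_all only: coprime_mult_right_iff)
    have ih: "sigma r dvd divisor_sigma k r" using less.IH[OF rm] r0 ck2 by simp
    have pp: "sigma (p^a) dvd divisor_sigma k (p^a)"
      unfolding sigma_def sigma_primepow[OF p(1)] using key_nat[OF _ ck1, of p] by simp
    show ?thesis
      unfolding r(1) sigma_def sigma_mult[OF cop pa0 r0]
      using mult_dvd_mono[OF pp ih] by (simp add: sigma_def)
  qed
qed

theorem mainTheorem5: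
  shows "(\<forall>m k::nat. m \<ge> 1 \<longrightarrow> k \<ge> 1 \<longrightarrow> coprime k (tau m)
            \<longrightarrow> sigma m dvd divisor_sigma k m)
       \<and> (\<forall>m k::nat. m \<ge> 1 \<longrightarrow> m dvd sigma m \<longrightarrow> k \<ge> 1 \<longrightarrow> coprime k (tau m)
            \<longrightarrow> m dvd divisor_sigma k m)
       \<and> (\<forall>m k::nat. m \<ge> 1 \<longrightarrow> m dvd sigma m \<longrightarrow> (\<exists>j. tau m = 2 ^ j)
            \<longrightarrow> k \<ge> 1 \<longrightarrow> odd k \<longrightarrow> m dvd divisor_sigma k m)"
proof (intro conjI allI impI)
  fix m k :: nat
  assume "m \<ge> 1" "coprime k (tau m)"
  thus "sigma m dvd divisor_sigma k m" by (rule part1)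
next
  fix m k :: nat
  assume "m \<ge> 1" "m dvd sigma m" "coprime k (tau m)"
  thus "m dvd divisor_sigma k m" using part1 dvd_trans by blast
next
  fix m k :: nat
  assume h: "m \<ge> 1" "m dvd sigma m" "\<exists>j. tau m = 2 ^ j" "odd k"
  then obtain j where j: "tau m = 2^j" by blast
  have "coprime k 2" using h(4) by (simp add: coprime_commute)
  hence "coprime k (tau m)" unfolding j by (simp add: coprime_power_right_iff)
  thus "m dvd divisor_sigma k m" using part1 h(1,2) dvd_trans by blast
qed

end
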